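(* Let $\varSigma$ be a finite alphabet, $d=|\varSigma|$, $N\ge1$, and $S=\{i\in\mathbb{Z}^d: i_\ell\ge0\ \forall\ell\in\varSigma,\ \sum_\ell i_\ell=N\}$. Let $(w_{\ell m})_{\ell,m\in\varSigma}$ be an irreducible Markov generator on $\varSigma$ that is reversible with respect to a distribution $\gamma$ on $\varSigma$. Let $\mathfrak{S}=\{e_m-e_\ell: m,\ell\in\varSigma, m\neq\ell\}$ and for $z\in\mathbb{R}^d$ define $U_k(z)=w_{\ell m}z_\ell$ if $k=e_m-e_\ell\in\mathfrak{S}$, $U_0(z)=-\sum_{\ell\ne m}w_{\ell m}z_\ell$, and $U_k(z)=0$ otherwise. Let $\boldsymbol{U}=(U_{ij})_{i,j\in S}$ with $U_{ij}=U_{j-i}(i)$, and let $R_i=R(i)$ with $R(z)=r\cdot z$ for some $r\in\mathbb{R}^d$. Then for every $z\in\mathrm{rint\,conv}\,S=\{z\in\mathbb{R}^d: z_\ell>0\ \forall\ell,\ \sum_\ell z_\ell=N\}$, \[ \Lambda(z)=R(z)-\frac12\sum_{k\in\mathfrak{S}}\Big(\sqrt{U_k(z)}-\sqrt{U_{-k}(z)}\Big)^2=\langle\nu^{(z)},R\rangle-I_{\boldsymbol{U}}(\nu^{(z)}), \] where $\nu^{(z)}=\mathrm{Mult}_{N,z/N}$ is the multinomial distribution with mean $z$, and \[ \Lambda(z):=\max_{\nu\in\mathsf{P}(S):\ \sum_i\nu_i i=z}\big[\langle\nu,R\rangle-I_{\boldsymbol{U}}(\nu)\big]. \]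
   Context: $e_\ell$ denotes the unit vector in $\mathbb{R}^d$ with coordinate $\ell$ equal to $1$ (coordinates indexed by $\varSigma$). $\mathsf{P}(S)$ is the set of probability vectors on $S$, $\langle\nu,f\rangle=\sum_i\nu_if_i$, and $I_{\boldsymbol{U}}(\nu):=\sup_{v\in(0,\infty)^S}[-\sum_i\nu_i(\boldsymbol{U}v)_i/v_i]$. $\mathrm{Mult}_{N,p}$ is the multinomial distribution of $N$ samples from the distribution $p$ on $\varSigma$, regarded as a probability vector on $S$. *)

theory Defs
  imports Complex_Main
begin

definition unitv :: "'a \<Rightarrow> 'a \<Rightarrow> int" where
  "unitv l = (\<lambda>m. if m = l then 1 else 0)"

definition lattS :: "nat \<Rightarrow> ('a::finite \<Rightarrow> nat) set" where
  "lattS N = {i. (\<Sum>l\<in>UNIV. i l) = N}"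

definition Sfrak :: "('a \<Rightarrow> int) set" where
  "Sfrak = {(\<lambda>a. unitv m a - unitv l a) | m l. m \<noteq> l}"

definition markov_generator :: "('a::finite \<Rightarrow> 'a \<Rightarrow> real) \<Rightarrow> bool" where
  "markov_generator w \<longleftrightarrow> (\<forall>l m. l \<noteq> m \<longrightarrow> w l m \<ge> 0) \<and>
     (\<forall>l. w l l = - (\<Sum>m\<in>UNIV - {l}. w l m))"

definition irreducible_gen :: "('a \<Rightarrow> 'a \<Rightarrow> real) \<Rightarrow> bool" where
  "irreducible_gen w \<longleftrightarrow> (\<forall>l m. (l, m) \<in> {(a, b). a \<noteq> b \<and> w a b > 0}\<^sup>*)"

definition reversible_wrt :: "('a::finite \<Rightarrow> 'a \<Rightarrow> real) \<Rightarrow> ('a \<Rightarrow> real) \<Rightarrow> bool" where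
  "reversible_wrt w \<gamma> \<longleftrightarrow> (\<forall>l. \<gamma> l \<ge> 0) \<and> (\<Sum>l\<in>UNIV. \<gamma> l) = 1 \<and>
     (\<forall>l m. \<gamma> l * w l m = \<gamma> m * w m l)"

definition Ufun :: "('a::finite \<Rightarrow> 'a \<Rightarrow> real) \<Rightarrow> ('a \<Rightarrow> int) \<Rightarrow> ('a \<Rightarrow> real) \<Rightarrow> real" where
  "Ufun w k z =
    (if k \<in> Sfrak then
       (case (THE (l, m). l \<noteq> m \<and> k = (\<lambda>a. unitv m a - unitv l a)) of (l, m) \<Rightarrow> w l m * z l)
     else if k = (\<lambda>_. 0) then - (\<Sum>(l, m)\<in>{(l, m). l \<noteq> m}. w l m * z l)
     else 0)"

definition Umat :: "('a::finite \<Rightarrow> 'a \<Rightarrow> real) \<Rightarrow> ('a \<Rightarrow> nat) \<Rightarrow> ('a \<Rightarrow> nat) \<Rightarrow> real" where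
  "Umat w i j = Ufun w (\<lambda>l. int (j l) - int (i l)) (\<lambda>l. real (i l))"

definition probS :: "nat \<Rightarrow> (('a::finite \<Rightarrow> nat) \<Rightarrow> real) set" where
  "probS N = {\<nu>. (\<forall>i\<in>lattS N. \<nu> i \<ge> 0) \<and> (\<Sum>i\<in>lattS N. \<nu> i) = 1}"

definition I_U :: "('a::finite \<Rightarrow> 'a \<Rightarrow> real) \<Rightarrow> nat \<Rightarrow> (('a \<Rightarrow> nat) \<Rightarrow> real) \<Rightarrow> real" where
  "I_U w N \<nu> = (SUP v \<in> {v. \<forall>j\<in>lattS N. v j > 0}.
      - (\<Sum>i\<in>lattS N. \<nu> i * (\<Sum>j\<in>lattS N. Umat w i j * v j) / v i))"

definition Rlin :: "('a::finite \<Rightarrow> real) \<Rightarrow> ('a \<Rightarrow> real) \<Rightarrow> real" where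
  "Rlin r z = (\<Sum>l\<in>UNIV. r l * z l)"

definition pairR :: "nat \<Rightarrow> (('a::finite \<Rightarrow> nat) \<Rightarrow> real) \<Rightarrow> ('a \<Rightarrow> real) \<Rightarrow> real" where
  "pairR N \<nu> r = (\<Sum>i\<in>lattS N. \<nu> i * Rlin r (\<lambda>l. real (i l)))"

definition objective :: "('a::finite \<Rightarrow> 'a \<Rightarrow> real) \<Rightarrow> ('a \<Rightarrow> real) \<Rightarrow> nat \<Rightarrow> (('a \<Rightarrow> nat) \<Rightarrow> real) \<Rightarrow> real" where
  "objective w r N \<nu> = pairR N \<nu> r - I_U w N \<nu>"

definition feasible :: "nat \<Rightarrow> ('a::finite \<Rightarrow> real) \<Rightarrow> (('a \<Rightarrow> nat) \<Rightarrow> real) set" where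
  "feasible N z = {\<nu>. \<nu> \<in> probS N \<and> (\<forall>l. (\<Sum>i\<in>lattS N. \<nu> i * real (i l)) = z l)}"

text \<open>Lambda(z) = max over feasible nu (stated via Sup; attainment is part of the theorem)\<close>
definition Lam :: "('a::finite \<Rightarrow> 'a \<Rightarrow> real) \<Rightarrow> ('a \<Rightarrow> real) \<Rightarrow> nat \<Rightarrow> ('a \<Rightarrow> real) \<Rightarrow> real" where
  "Lam w r N z = Sup (objective w r N ` feasible N z)"

definition multinomial :: "nat \<Rightarrow> ('a::finite \<Rightarrow> real) \<Rightarrow> ('a \<Rightarrow> nat) \<Rightarrow> real" where
  "multinomial N p i =
     (if i \<in> lattS N then real (fact N) / (\<Prod>l\<in>UNIV. real (fact (i l))) * (\<Prod>l\<in>UNIV. p l ^ i l)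
      else 0)"

end

theory Submission
  imports Defs
begin


definition addv :: "'a \<Rightarrow> ('a \<Rightarrow> nat) \<Rightarrow> ('a \<Rightarrow> nat)" where
  "addv k i = i(k := Suc (i k))"
definition mv :: "'a \<Rightarrow> 'a \<Rightarrow> ('a \<Rightarrow> nat) \<Rightarrow> ('a \<Rightarrow> nat)" where
  "mv l m i = i(l := i l - 1, m := Suc (i m))"
definition PP :: "('a \<times> 'a) set" where "PP = {(l, m). l \<noteq> m}"
definition ev :: "'a \<Rightarrow> 'a \<Rightarrow> 'a \<Rightarrow> int" where
  "ev l m = (\<lambda>a. unitv m a - unitv l a)"

lemma finite_PP: "finite (PP :: ('a::finite \<times> 'a) set)"
  by (rule finite_subset[of _ UNIV]) auto

lemma finite_lattS: "finite (lattS N :: ('a::finite \<Rightarrow> nat) set)"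
proof -
  have "lattS N \<subseteq> {f :: 'a \<Rightarrow> nat. \<forall>x. (x \<in> UNIV \<longrightarrow> f x \<in> {..N}) \<and> (x \<notin> UNIV \<longrightarrow> f x = 0)}"
  proof
    fix i :: "'a \<Rightarrow> nat" assume "i \<in> lattS N"
    then have "\<forall>l. i l \<le> N" unfolding lattS_def
      using member_le_sum[of _ UNIV i] by fastforce
    then show "i \<in> {f :: 'a \<Rightarrow> nat. \<forall>x. (x \<in> UNIV \<longrightarrow> f x \<in> {..N}) \<and> (x \<notin> UNIV \<longrightarrow> f x = 0)}" by auto
  qed
  then show ?thesis by (rule finite_subset) (rule finite_set_of_finite_funs, auto)
qed

lemma sum_upd: "(\<Sum>l\<in>UNIV. ((i::'a::finite\<Rightarrow>nat)(k := x)) l) = (\<Sum>l\<in>UNIV. i l) - i k + (x::nat)"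
proof -
  have "(\<Sum>l\<in>UNIV. (i(k := x)) l) = x + (\<Sum>l\<in>UNIV-{k}. i l)"
    by (subst sum.remove[of _ k]) auto
  moreover have "(\<Sum>l\<in>UNIV. i l) = i k + (\<Sum>l\<in>UNIV-{k}. i l)"
    by (subst sum.remove[of _ k]) auto
  ultimately show ?thesis by simp
qed

lemma prod_upd: "(\<Prod>l\<in>UNIV. f l (((i::'a::finite\<Rightarrow>_)(k := x)) l)) = f k x * (\<Prod>l\<in>UNIV-{k}. f l (i l))"
  by (subst prod.remove[of _ k]) auto

lemma addv_lattS: "i \<in> lattS N \<Longrightarrow> addv k i \<in> lattS (Suc N)"
  unfolding lattS_def addv_def using sum_upd[of i k "Suc (i k)"]
  using member_le_sum[of k UNIV i] by auto

lemma addv_inj: "addv k i = addv k i' \<Longrightarrow> i = i'"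
  unfolding addv_def by (metis fun_upd_apply fun_upd_idem_iff fun_upd_upd nat.inject)

lemma shift:
  fixes g :: "('a::finite \<Rightarrow> nat) \<Rightarrow> real"
  shows "(\<Sum>j\<in>lattS (Suc M). real (j k) * g j) = (\<Sum>i\<in>lattS M. real (Suc (i k)) * g (addv k i))"
proof -
  have "(\<Sum>j\<in>lattS (Suc M). real (j k) * g j) = (\<Sum>j\<in>{j\<in>lattS (Suc M). j k \<noteq> 0}. real (j k) * g j)"
    by (rule sum.mono_neutral_right) (auto simp: finite_lattS)
  also have "\<dots> = (\<Sum>i\<in>lattS M. real (Suc (i k)) * g (addv k i))"
  proof (rule sum.reindex_bij_witness[of _ "addv k" "\<lambda>j. j(k := j k - 1)"])
    fix i :: "'a \<Rightarrow> nat" assume "i \<in> lattS M" then show "addv k i \<in> {j \<in> lattS (Suc M). j k \<noteq> 0}"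
      using addv_lattS by (auto simp: addv_def)
  next
    fix j :: "'a \<Rightarrow> nat" assume j: "j \<in> {j \<in> lattS (Suc M). j k \<noteq> 0}"
    then show "addv k (j(k := j k - 1)) = j" by (auto simp: addv_def)
    show "j(k := j k - 1) \<in> lattS M" using j sum_upd[of j k "j k - 1"] member_le_sum[of k UNIV j]
      by (auto simp: lattS_def)
    show "real (Suc ((j(k := j k - 1)) k)) * g (addv k (j(k := j k - 1))) = real (j k) * g j"
      using j by (auto simp: addv_def)
  qed (auto simp: addv_def)
  finally show ?thesis .
qed

lemma prod_rem: "(\<Prod>l\<in>(UNIV::'a::finite set). f l) = f k * (\<Prod>l\<in>UNIV-{k}. f l)"
  by (subst prod.remove[of _ k]) auto

lemma mult_core:
  fixes p :: "'a::finite \<Rightarrow> real"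
  assumes i: "i \<in> lattS M"
  shows "real (Suc (i k)) * multinomial (Suc M) p (addv k i) = real (Suc M) * p k * multinomial M p i"
proof -
  have a: "addv k i \<in> lattS (Suc M)" using addv_lattS[OF i] .
  have f1: "(\<Prod>l\<in>UNIV. real (fact (addv k i l))) = real (fact (Suc (i k))) * (\<Prod>l\<in>UNIV-{k}. real (fact (i l)))"
    unfolding addv_def by (rule prod_upd)
  have f2: "(\<Prod>l\<in>UNIV. real (fact (i l))) = real (fact (i k)) * (\<Prod>l\<in>UNIV-{k}. real (fact (i l)))"
    by (rule prod_rem)
  have p1: "(\<Prod>l\<in>UNIV. p l ^ addv k i l) = p k ^ Suc (i k) * (\<Prod>l\<in>UNIV-{k}. p l ^ i l)"
    unfolding addv_def by (rule prod_upd)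
  have p2: "(\<Prod>l\<in>UNIV. p l ^ i l) = p k ^ i k * (\<Prod>l\<in>UNIV-{k}. p l ^ i l)"
    by (rule prod_rem)
  have nz: "(\<Prod>l\<in>UNIV-{k}. real (fact (i l))) \<noteq> 0" by (simp add: prod_pos)
  have fs: "\<And>n. real (fact (Suc n)) = real (Suc n) * real (fact n)" by (simp add: algebra_simps)
  have fp: "\<And>n. real (fact n) > 0" by simp
  define F where "F = (\<Prod>l\<in>UNIV-{k}. real (fact (i l)))"
  define Q where "Q = (\<Prod>l\<in>UNIV-{k}. p l ^ i l)"
  have "real (Suc (i k)) * multinomial (Suc M) p (addv k i)
      = real (Suc (i k)) * (real (fact (Suc M)) / (real (fact (Suc (i k))) * F) * (p k ^ Suc (i k) * Q))"
    using a unfolding multinomial_def f1 p1 F_def Q_def by simp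
  also have "\<dots> = real (Suc M) * p k * (real (fact M) / (real (fact (i k)) * F) * (p k ^ i k * Q))"
    unfolding fs using nz fp[of "i k"] unfolding F_def by (simp add: field_simps del: of_nat_Suc)
  also have "\<dots> = real (Suc M) * p k * multinomial M p i"
    using i unfolding multinomial_def f2 p2 F_def Q_def by simp
  finally show ?thesis .
qed

lemma lattS_0: "lattS 0 = {(\<lambda>_. 0) :: 'a::finite \<Rightarrow> nat}"
  unfolding lattS_def by auto

lemma lattS_real_sum: "j \<in> lattS N \<Longrightarrow> (\<Sum>l\<in>UNIV. real (j l)) = real N"
  unfolding lattS_def by (simp flip: of_nat_sum)

lemma mult_sum:
  fixes p :: "'a::finite \<Rightarrow> real"
  shows "(\<Sum>i\<in>lattS N. multinomial N p i) = (\<Sum>l\<in>UNIV. p l) ^ N"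
proof (induction N)
  case 0
  have "(\<lambda>_. 0) \<in> (lattS 0 :: ('a \<Rightarrow> nat) set)" by (simp add: lattS_0)
  then show ?case unfolding lattS_0 by (simp add: multinomial_def lattS_0)
next
  case (Suc M)
  have "(\<Sum>j\<in>lattS (Suc M). multinomial (Suc M) p j)
      = (\<Sum>j\<in>lattS (Suc M). (\<Sum>l\<in>UNIV. real (j l)) / real (Suc M) * multinomial (Suc M) p j)"
    by (rule sum.cong) (auto simp: lattS_real_sum simp del: of_nat_Suc)
  also have "\<dots> = (1 / real (Suc M)) * (\<Sum>l\<in>UNIV. \<Sum>j\<in>lattS (Suc M). real (j l) * multinomial (Suc M) p j)"
    by (simp add: sum_distrib_left sum_distrib_right sum_divide_distrib sum.swap[of _ UNIV] del: of_nat_Suc)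
  also have "\<dots> = (1 / real (Suc M)) * (\<Sum>l\<in>UNIV. \<Sum>i\<in>lattS M. real (Suc (i l)) * multinomial (Suc M) p (addv l i))"
    by (simp only: shift)
  also have "\<dots> = (1 / real (Suc M)) * (\<Sum>l\<in>UNIV. \<Sum>i\<in>lattS M. real (Suc M) * p l * multinomial M p i)"
    by (simp only: mult_core cong: sum.cong)
  also have "\<dots> = (\<Sum>l\<in>UNIV. p l * (\<Sum>i\<in>lattS M. multinomial M p i))"
    by (simp add: sum_distrib_left sum_distrib_right del: of_nat_Suc)
  also have "\<dots> = (\<Sum>l\<in>UNIV. p l) ^ Suc M"
    by (simp add: Suc sum_distrib_right)
  finally show ?case .
qed

lemma mult_mean:
  fixes p :: "'a::finite \<Rightarrow> real"
  shows "(\<Sum>j\<in>lattS (Suc M). multinomial (Suc M) p j * real (j k)) = real (Suc M) * p k * (\<Sum>l\<in>UNIV. p l) ^ M"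
proof -
  have "(\<Sum>j\<in>lattS (Suc M). multinomial (Suc M) p j * real (j k)) = (\<Sum>j\<in>lattS (Suc M). real (j k) * multinomial (Suc M) p j)"
    by (simp add: mult.commute)
  also have "\<dots> = (\<Sum>i\<in>lattS M. real (Suc (i k)) * multinomial (Suc M) p (addv k i))"
    by (rule shift)
  also have "\<dots> = (\<Sum>i\<in>lattS M. real (Suc M) * p k * multinomial M p i)"
    by (simp only: mult_core cong: sum.cong)
  also have "\<dots> = real (Suc M) * p k * (\<Sum>l\<in>UNIV. p l) ^ M"
    by (simp only: mult_sum flip: sum_distrib_left)
  finally show ?thesis .
qed



lemma ev_inj: "l \<noteq> m \<Longrightarrow> l' \<noteq> m' \<Longrightarrow> ev l m = ev l' m' \<Longrightarrow> l = l' \<and> m = m'"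
proof -
  assume a: "l \<noteq> m" "l' \<noteq> m'" "ev l m = ev l' m'"
  have 1: "ev l' m' m = 1" using a(1) fun_cong[OF a(3), of m] by (simp add: ev_def unitv_def)
  have 2: "ev l' m' l = -1" using a(1) fun_cong[OF a(3), of l] by (simp add: ev_def unitv_def)
  from 1 have "m' = m" by (auto simp: ev_def unitv_def split: if_splits)
  moreover from 2 have "l' = l" using \<open>m' = m\<close> a(1) by (auto simp: ev_def unitv_def split: if_splits)
  ultimately show ?thesis by simp
qed

lemma Sfrak_ev: "Sfrak = (\<lambda>(l, m). ev l m) ` PP"
  unfolding Sfrak_def PP_def ev_def by auto

lemma zero_notin_Sfrak: "(\<lambda>_. 0) \<notin> (Sfrak :: ('a \<Rightarrow> int) set)"
proof
  assume "(\<lambda>_. 0) \<in> (Sfrak :: ('a \<Rightarrow> int) set)"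
  then obtain l m :: 'a where lm: "m \<noteq> l" and e: "(\<lambda>_. 0::int) = (\<lambda>a. unitv m a - unitv l a)"
    unfolding Sfrak_def by auto
  have "(0::int) = unitv m m - unitv l m" using fun_cong[OF e, of m] by simp
  then show False using lm by (simp add: unitv_def)
qed

lemma Ufun_ev: "l \<noteq> m \<Longrightarrow> Ufun w (ev l m) z = w l m * z l"
proof -
  assume lm: "l \<noteq> m"
  have mem: "ev l m \<in> Sfrak" using lm unfolding Sfrak_ev PP_def by auto
  have "(THE (l', m'). l' \<noteq> m' \<and> ev l m = (\<lambda>a. unitv m' a - unitv l' a)) = (l, m)"
  proof (rule the_equality)
    show "case (l, m) of (l', m') \<Rightarrow> l' \<noteq> m' \<and> ev l m = (\<lambda>a. unitv m' a - unitv l' a)"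
      using lm by (simp add: ev_def)
  next
    fix x assume "case x of (l', m') \<Rightarrow> l' \<noteq> m' \<and> ev l m = (\<lambda>a. unitv m' a - unitv l' a)"
    then show "x = (l, m)" using ev_inj[OF lm] unfolding ev_def[symmetric]
      by (cases x) (auto simp: ev_def)
  qed
  then show ?thesis using mem unfolding Ufun_def by simp
qed

lemma Ufun_0: "Ufun w (\<lambda>_. 0) z = - (\<Sum>(l, m)\<in>PP. w l m * z l)"
  unfolding Ufun_def PP_def by (simp add: zero_notin_Sfrak)

lemma Umat_diag: "Umat w i i = - (\<Sum>(l, m)\<in>PP. w l m * real (i l))"
  unfolding Umat_def using Ufun_0[of w "\<lambda>l. real (i l)"] by simp

lemma mv_diff: "l \<noteq> m \<Longrightarrow> i l \<noteq> 0 \<Longrightarrow> (\<lambda>a. int (mv l m i a) - int (i a)) = ev l m"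
  by (auto simp: mv_def ev_def unitv_def)

lemma sum_two: "l \<noteq> m \<Longrightarrow> (\<Sum>a\<in>(UNIV::'a::finite set). f a) = f l + f m + (\<Sum>a\<in>UNIV-{l,m}. f a)"
proof -
  assume lm: "l \<noteq> m"
  have "(\<Sum>a\<in>(UNIV::'a set). f a) = f l + (\<Sum>a\<in>UNIV-{l}. f a)" by (subst sum.remove[of _ l]) auto
  also have "(\<Sum>a\<in>UNIV-{l}. f a) = f m + (\<Sum>a\<in>UNIV-{l}-{m}. f a)" using lm by (subst sum.remove[of _ m]) auto
  finally show ?thesis by (simp add: Diff_insert2[symmetric] insert_commute add.assoc)
qed

lemma sum_mv: "l \<noteq> m \<Longrightarrow> (\<Sum>a\<in>UNIV. mv l m (i::'a::finite\<Rightarrow>nat) a) = (\<Sum>a\<in>UNIV. i a) + 1 - (if i l = 0 then 0 else 1)"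
proof -
  assume lm: "l \<noteq> m"
  have e: "(\<Sum>a\<in>UNIV-{l,m}. mv l m i a) = (\<Sum>a\<in>UNIV-{l,m}. i a)"
    by (rule sum.cong) (auto simp: mv_def)
  show ?thesis using sum_two[OF lm, of "mv l m i"] sum_two[OF lm, of i] e lm
    by (auto simp: mv_def)
qed

lemma mv_lattS: "l \<noteq> m \<Longrightarrow> i l \<noteq> 0 \<Longrightarrow> i \<in> lattS N \<Longrightarrow> mv l m i \<in> lattS N"
  using sum_mv[of l m i] unfolding lattS_def by auto

lemma mv_not_lattS: "l \<noteq> m \<Longrightarrow> i l = 0 \<Longrightarrow> i \<in> lattS N \<Longrightarrow> mv l m i \<notin> lattS N"
  using sum_mv[of l m i] unfolding lattS_def by auto

lemma mv_neq: "l \<noteq> m \<Longrightarrow> mv l m i \<noteq> i"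
  unfolding mv_def by (metis fun_upd_same n_not_Suc_n)

lemma diff_eq: "(\<lambda>a. int (x a) - int (i a)) = (\<lambda>a. int (y a) - int (i a)) \<Longrightarrow> x = y"
proof
  fix a assume "(\<lambda>a. int (x a) - int (i a)) = (\<lambda>a. int (y a) - int (i a))"
  then show "x a = y a" using fun_cong[of _ _ a] by fastforce
qed



lemma Umat_off:
  assumes i: "i \<in> lattS N" and j: "j \<in> lattS N" and ne: "j \<noteq> i"
  shows "Umat w i j = (\<Sum>(l, m)\<in>PP. if j = mv l m i then w l m * real (i l) else 0)"
proof (cases "(\<lambda>a. int (j a) - int (i a)) \<in> Sfrak")
  case True
  then obtain m0 l0 where lm0': "m0 \<noteq> l0" and k': "(\<lambda>a. int (j a) - int (i a)) = (\<lambda>a. unitv m0 a - unitv l0 a)"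
    unfolding Sfrak_def by auto
  have lm0: "l0 \<noteq> m0" using lm0' by simp
  have k: "(\<lambda>a. int (j a) - int (i a)) = ev l0 m0" using k' by (simp add: ev_def)
  have il0: "i l0 \<noteq> 0" using fun_cong[OF k, of l0] lm0 by (auto simp: ev_def unitv_def)
  have jmv: "j = mv l0 m0 i" using diff_eq k mv_diff[of l0 m0 i, OF lm0 il0] by metis
  have U: "Umat w i j = w l0 m0 * real (i l0)" unfolding Umat_def k using Ufun_ev[OF lm0] by simp
  have eq: "(j = mv l m i) = ((l, m) = (l0, m0))" if "(l, m) \<in> PP" for l m
  proof -
    from that have lm: "l \<noteq> m" by (simp add: PP_def)
    show ?thesis
    proof
      assume jm: "j = mv l m i"
      have "i l \<noteq> 0" using mv_not_lattS[OF lm _ i] j jm by auto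
      then have "ev l m = ev l0 m0" using mv_diff[OF lm] k jm by auto
      then show "(l, m) = (l0, m0)" using ev_inj[OF lm lm0] by auto
    qed (simp add: jmv)
  qed
  have "(\<Sum>(l, m)\<in>PP. if j = mv l m i then w l m * real (i l) else 0)
      = (\<Sum>x\<in>PP. if x = (l0, m0) then w l0 m0 * real (i l0) else 0)"
  proof (rule sum.cong)
    fix x :: "'a \<times> 'a" assume x: "x \<in> PP"
    obtain l m where xl: "x = (l, m)" by (cases x)
    have e: "(j = mv l m i) = ((l, m) = (l0, m0))" using eq x xl by simp
    show "(case x of (l, m) \<Rightarrow> if j = mv l m i then w l m * real (i l) else 0) = (if x = (l0, m0) then w l0 m0 * real (i l0) else 0)"
      unfolding xl prod.case e by (cases "(l, m) = (l0, m0)") auto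
  qed simp
  also have "\<dots> = w l0 m0 * real (i l0)" using lm0 finite_PP by (simp add: PP_def)
  finally show ?thesis using U by simp
next
  case False
  have nz: "(\<lambda>a. int (j a) - int (i a)) \<noteq> (\<lambda>_. 0)" using ne diff_eq[of j i i] by auto
  have U: "Umat w i j = 0" unfolding Umat_def Ufun_def using False nz by simp
  have nm: "j \<noteq> mv l m i" if "(l, m) \<in> PP" for l m
  proof
    assume jm: "j = mv l m i"
    from that have lm: "l \<noteq> m" by (simp add: PP_def)
    have "i l \<noteq> 0" using mv_not_lattS[OF lm _ i] j jm by auto
    then have "(\<lambda>a. int (j a) - int (i a)) \<in> Sfrak" using mv_diff[OF lm] jm lm
      unfolding Sfrak_def ev_def by auto
    then show False using False by simp
  qed
  have "(\<Sum>(l, m)\<in>PP. if j = mv l m i then w l m * real (i l) else 0) = 0"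
    by (rule sum.neutral) (auto simp: nm)
  then show ?thesis using U by simp
qed

lemma gen:
  fixes i :: "'a::finite \<Rightarrow> nat" and w :: "'a \<Rightarrow> 'a \<Rightarrow> real" and f :: "('a \<Rightarrow> nat) \<Rightarrow> real"
  assumes i: "i \<in> lattS N"
  shows "(\<Sum>j\<in>lattS N. Umat w i j * f j) = (\<Sum>(l, m)\<in>PP. w l m * real (i l) * (f (mv l m i) - f i))"
proof -
  have "(\<Sum>j\<in>lattS N. Umat w i j * f j) = Umat w i i * f i + (\<Sum>j\<in>lattS N - {i}. Umat w i j * f j)"
    using i finite_lattS by (subst sum.remove[of _ i]) auto
  also have "(\<Sum>j\<in>lattS N - {i}. Umat w i j * f j) = (\<Sum>j\<in>lattS N - {i}. \<Sum>(l, m)\<in>PP. if j = mv l m i then w l m * real (i l) * f j else 0)"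
  proof (rule sum.cong)
    fix j assume "j \<in> lattS N - {i}"
    then show "Umat w i j * f j = (\<Sum>(l, m)\<in>PP. if j = mv l m i then w l m * real (i l) * f j else 0)"
      using Umat_off[OF i, of j w] by (auto simp: sum_distrib_right intro!: sum.cong)
  qed simp
  also have "\<dots> = (\<Sum>(l, m)\<in>PP. \<Sum>j\<in>lattS N - {i}. if j = mv l m i then w l m * real (i l) * f j else 0)"
    unfolding split_def by (rule sum.swap)
  also have "\<dots> = (\<Sum>(l, m)\<in>PP. w l m * real (i l) * f (mv l m i))"
  proof (rule sum.cong, simp, clarify)
    fix l m :: 'a assume "(l, m) \<in> PP" hence lm: "l \<noteq> m" by (simp add: PP_def)
    show "(\<Sum>j\<in>lattS N - {i}. if j = mv l m i then w l m * real (i l) * f j else 0) = w l m * real (i l) * f (mv l m i)"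
    proof (cases "i l = 0")
      case True then show ?thesis by (simp add: sum.neutral)
    next
      case False
      then have "mv l m i \<in> lattS N - {i}" using mv_lattS[OF lm False i] mv_neq[OF lm] by auto
      moreover have "finite (lattS N - {i})" using finite_lattS by simp
      ultimately show ?thesis using sum.delta[of "lattS N - {i}" "mv l m i" "\<lambda>j. w l m * real (i l) * f j"] by simp
    qed
  qed
  finally have "(\<Sum>j\<in>lattS N. Umat w i j * f j) = Umat w i i * f i + (\<Sum>(l, m)\<in>PP. w l m * real (i l) * f (mv l m i))" .
  also have "\<dots> = (\<Sum>(l, m)\<in>PP. w l m * real (i l) * f (mv l m i)) - (\<Sum>(l, m)\<in>PP. w l m * real (i l) * f i)"
    by (simp add: Umat_diag sum_distrib_right case_prod_beta)
  also have "\<dots> = (\<Sum>(l, m)\<in>PP. w l m * real (i l) * (f (mv l m i) - f i))"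
    by (simp add: sum_subtractf[symmetric] case_prod_beta right_diff_distrib)
  finally show ?thesis .
qed



lemma mv_addv: "l \<noteq> m \<Longrightarrow> mv l m (addv l i) = addv m i"
  by (auto simp: mv_def addv_def fun_eq_iff)

lemma amgm:
  fixes a b t :: real
  assumes "a \<ge> 0" "b \<ge> 0" "t > 0"
  shows "2 * sqrt (a * b) \<le> a * t + b / t"
proof -
  have e: "sqrt (a * b) = sqrt (a * t) * sqrt (b / t)"
    using assms by (simp add: real_sqrt_mult[symmetric])
  have "0 \<le> (sqrt (a * t) - sqrt (b / t))^2" by simp
  then have "2 * (sqrt (a * t) * sqrt (b / t)) \<le> (sqrt (a * t))^2 + (sqrt (b / t))^2"
    by (simp add: power2_eq_square algebra_simps)
  also have "\<dots> = a * t + b / t" using assms by simp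
  finally show ?thesis using e by simp
qed

lemma swapPP: "(\<Sum>(l, m)\<in>PP. f l m) = (\<Sum>(l, m)\<in>PP. (f m l :: real))"
  by (rule sum.reindex_bij_witness[of _ prod.swap prod.swap]) (auto simp: PP_def)

lemma pair_bound:
  fixes A t :: "'a \<Rightarrow> 'a \<Rightarrow> 'b \<Rightarrow> real"
  assumes fin: "finite I"
    and A: "\<And>l m x. (l, m) \<in> PP \<Longrightarrow> x \<in> I \<Longrightarrow> A l m x \<ge> 0"
    and t: "\<And>l m x. (l, m) \<in> PP \<Longrightarrow> x \<in> I \<Longrightarrow> t l m x > 0"
    and tinv: "\<And>l m x. (l, m) \<in> PP \<Longrightarrow> x \<in> I \<Longrightarrow> t m l x = 1 / t l m x"
  shows "(\<Sum>(l, m)\<in>PP. \<Sum>x\<in>I. sqrt (A l m x * A m l x)) \<le> (\<Sum>(l, m)\<in>PP. \<Sum>x\<in>I. A l m x * t l m x)"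
proof -
  have sw: "(\<Sum>(l, m)\<in>PP. \<Sum>x\<in>I. A l m x * t l m x) = (\<Sum>(l, m)\<in>PP. \<Sum>x\<in>I. A m l x * t m l x)"
    by (rule swapPP)
  have "(\<Sum>(l, m)\<in>PP. \<Sum>x\<in>I. 2 * sqrt (A l m x * A m l x))
      \<le> (\<Sum>(l, m)\<in>PP. \<Sum>x\<in>I. A l m x * t l m x + A m l x * t m l x)"
  proof (rule sum_mono, clarify, rule sum_mono)
    fix l m :: 'a and x assume lm: "(l, m) \<in> PP" and x: "x \<in> I"
    have lm': "(m, l) \<in> PP" using lm by (auto simp: PP_def)
    show "2 * sqrt (A l m x * A m l x) \<le> A l m x * t l m x + A m l x * t m l x"
      using amgm[OF A[OF lm x] A[OF lm' x] t[OF lm x]] tinv[OF lm x] by simp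
  qed
  also have "\<dots> = (\<Sum>(l, m)\<in>PP. \<Sum>x\<in>I. A l m x * t l m x) + (\<Sum>(l, m)\<in>PP. \<Sum>x\<in>I. A m l x * t m l x)"
    by (simp add: sum.distrib case_prod_beta)
  also have "\<dots> = 2 * (\<Sum>(l, m)\<in>PP. \<Sum>x\<in>I. A l m x * t l m x)" using sw by simp
  finally show ?thesis by (simp add: sum_distrib_left[symmetric] case_prod_beta)
qed

definition Gf :: "('a::finite \<Rightarrow> 'a \<Rightarrow> real) \<Rightarrow> nat \<Rightarrow> (('a \<Rightarrow> nat) \<Rightarrow> real) \<Rightarrow> (('a \<Rightarrow> nat) \<Rightarrow> real) \<Rightarrow> real" where
  "Gf w N \<nu> v = - (\<Sum>i\<in>lattS N. \<nu> i * (\<Sum>j\<in>lattS N. Umat w i j * v j) / v i)"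

definition Aw :: "('a::finite \<Rightarrow> 'a \<Rightarrow> real) \<Rightarrow> (('a \<Rightarrow> nat) \<Rightarrow> real) \<Rightarrow> 'a \<Rightarrow> 'a \<Rightarrow> ('a \<Rightarrow> nat) \<Rightarrow> real" where
  "Aw w \<nu> l m i = real (Suc (i l)) * w l m * \<nu> (addv l i)"

lemma I_U_Gf: "I_U w N \<nu> = (SUP v \<in> {v. \<forall>j\<in>lattS N. v j > 0}. Gf w N \<nu> v)"
  unfolding I_U_def Gf_def ..

lemma Gf_formula:
  fixes w :: "'a::finite \<Rightarrow> 'a \<Rightarrow> real"
  assumes v: "\<forall>j\<in>lattS (Suc M). v j > 0"
  shows "Gf w (Suc M) \<nu> v = (\<Sum>(l, m)\<in>PP. \<Sum>i\<in>lattS M. Aw w \<nu> l m i - Aw w \<nu> l m i * (v (addv m i) / v (addv l i)))"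
proof -
  have "(\<Sum>i\<in>lattS (Suc M). \<nu> i * (\<Sum>j\<in>lattS (Suc M). Umat w i j * v j) / v i)
     = (\<Sum>i\<in>lattS (Suc M). \<Sum>(l, m)\<in>PP. real (i l) * (w l m * \<nu> i * (v (mv l m i) / v i - 1)))"
  proof (rule sum.cong, simp)
    fix i :: "'a \<Rightarrow> nat" assume i: "i \<in> lattS (Suc M)"
    have vi: "v i > 0" using v i by auto
    show "\<nu> i * (\<Sum>j\<in>lattS (Suc M). Umat w i j * v j) / v i = (\<Sum>(l, m)\<in>PP. real (i l) * (w l m * \<nu> i * (v (mv l m i) / v i - 1)))"
      unfolding gen[OF i] using vi
      by (simp add: sum_distrib_left sum_divide_distrib case_prod_beta field_simps)
  qed
  also have "\<dots> = (\<Sum>(l, m)\<in>PP. \<Sum>i\<in>lattS (Suc M). real (i l) * (w l m * \<nu> i * (v (mv l m i) / v i - 1)))"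
    unfolding split_def by (rule sum.swap)
  also have "\<dots> = (\<Sum>(l, m)\<in>PP. \<Sum>i\<in>lattS M. real (Suc (i l)) * (w l m * \<nu> (addv l i) * (v (mv l m (addv l i)) / v (addv l i) - 1)))"
    by (simp only: shift)
  also have "\<dots> = (\<Sum>(l, m)\<in>PP. \<Sum>i\<in>lattS M. Aw w \<nu> l m i * (v (addv m i) / v (addv l i)) - Aw w \<nu> l m i)"
  proof (rule sum.cong, simp, clarify, rule sum.cong, simp)
    fix l m :: 'a and i :: "'a \<Rightarrow> nat" assume "(l, m) \<in> PP"
    then have lm: "l \<noteq> m" by (simp add: PP_def)
    show "real (Suc (i l)) * (w l m * \<nu> (addv l i) * (v (mv l m (addv l i)) / v (addv l i) - 1))
       = Aw w \<nu> l m i * (v (addv m i) / v (addv l i)) - Aw w \<nu> l m i"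
      unfolding mv_addv[OF lm] Aw_def by (simp add: algebra_simps add_divide_distrib)
  qed
  finally show ?thesis unfolding Gf_def
    by (simp add: sum_negf[symmetric] case_prod_beta)
qed

definition Kb :: "('a::finite \<Rightarrow> 'a \<Rightarrow> real) \<Rightarrow> nat \<Rightarrow> (('a \<Rightarrow> nat) \<Rightarrow> real) \<Rightarrow> real" where
  "Kb w M \<nu> = (\<Sum>(l, m)\<in>PP. \<Sum>i\<in>lattS M. Aw w \<nu> l m i - sqrt (Aw w \<nu> l m i * Aw w \<nu> m l i))"

lemma Gf_le:
  fixes w :: "'a::finite \<Rightarrow> 'a \<Rightarrow> real"
  assumes wpos: "\<forall>l m. l \<noteq> m \<longrightarrow> w l m \<ge> 0" and nu: "\<forall>i\<in>lattS (Suc M). \<nu> i \<ge> 0"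
    and v: "\<forall>j\<in>lattS (Suc M). v j > 0"
  shows "Gf w (Suc M) \<nu> v \<le> Kb w M \<nu>"
proof -
  let ?t = "\<lambda>l m i. v (addv m i) / v (addv l i)"
  have pb: "(\<Sum>(l, m)\<in>PP. \<Sum>i\<in>lattS M. sqrt (Aw w \<nu> l m i * Aw w \<nu> m l i)) \<le> (\<Sum>(l, m)\<in>PP. \<Sum>i\<in>lattS M. Aw w \<nu> l m i * ?t l m i)"
  proof (rule pair_bound[OF finite_lattS])
    fix l m :: 'a and i :: "'a \<Rightarrow> nat" assume lm: "(l, m) \<in> PP" and i: "i \<in> lattS M"
    have a: "addv l i \<in> lattS (Suc M)" "addv m i \<in> lattS (Suc M)" using addv_lattS[OF i] by auto
    show "Aw w \<nu> l m i \<ge> 0" unfolding Aw_def using wpos lm nu a by (auto simp: PP_def)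
    show "?t l m i > 0" using v a by auto
    show "?t m l i = 1 / ?t l m i" by simp
  qed
  have "Gf w (Suc M) \<nu> v = (\<Sum>(l, m)\<in>PP. \<Sum>i\<in>lattS M. Aw w \<nu> l m i) - (\<Sum>(l, m)\<in>PP. \<Sum>i\<in>lattS M. Aw w \<nu> l m i * ?t l m i)"
    unfolding Gf_formula[OF v] by (simp add: sum_subtractf case_prod_beta)
  also have "\<dots> \<le> (\<Sum>(l, m)\<in>PP. \<Sum>i\<in>lattS M. Aw w \<nu> l m i) - (\<Sum>(l, m)\<in>PP. \<Sum>i\<in>lattS M. sqrt (Aw w \<nu> l m i * Aw w \<nu> m l i))"
    using pb by simp
  also have "\<dots> = Kb w M \<nu>" unfolding Kb_def by (simp add: sum_subtractf case_prod_beta)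
  finally show ?thesis .
qed

lemma I_U_le:
  fixes w :: "'a::finite \<Rightarrow> 'a \<Rightarrow> real"
  assumes wpos: "\<forall>l m. l \<noteq> m \<longrightarrow> w l m \<ge> 0" and nu: "\<forall>i\<in>lattS (Suc M). \<nu> i \<ge> 0"
  shows "I_U w (Suc M) \<nu> \<le> Kb w M \<nu>"
  unfolding I_U_Gf
proof (rule cSUP_least)
  show "{v :: ('a \<Rightarrow> nat) \<Rightarrow> real. \<forall>j\<in>lattS (Suc M). 0 < v j} \<noteq> {}" proof -
    have "(\<lambda>_. 1::real) \<in> {v :: ('a \<Rightarrow> nat) \<Rightarrow> real. \<forall>j\<in>lattS (Suc M). 0 < v j}" by simp
    then show ?thesis by (metis empty_iff)
  qed
  fix v :: "('a \<Rightarrow> nat) \<Rightarrow> real" assume "v \<in> {v. \<forall>j\<in>lattS (Suc M). 0 < v j}"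
  then show "Gf w (Suc M) \<nu> v \<le> Kb w M \<nu>" using Gf_le[OF wpos nu] by auto
qed

lemma I_U_ge:
  fixes w :: "'a::finite \<Rightarrow> 'a \<Rightarrow> real"
  assumes wpos: "\<forall>l m. l \<noteq> m \<longrightarrow> w l m \<ge> 0" and nu: "\<forall>i\<in>lattS (Suc M). \<nu> i \<ge> 0"
    and v: "\<forall>j\<in>lattS (Suc M). v j > 0"
  shows "Gf w (Suc M) \<nu> v \<le> I_U w (Suc M) \<nu>"
  unfolding I_U_Gf
proof (rule cSUP_upper)
  show "v \<in> {v. \<forall>j\<in>lattS (Suc M). 0 < v j}" using v by auto
  show "bdd_above (Gf w (Suc M) \<nu> ` {v. \<forall>j\<in>lattS (Suc M). 0 < v j})"
    by (rule bdd_aboveI2[where M = "Kb w M \<nu>"]) (use Gf_le[OF wpos nu] in auto)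
qed



lemma mult_nonneg: "\<forall>l. p l \<ge> 0 \<Longrightarrow> multinomial N p i \<ge> (0::real)"
  unfolding multinomial_def by (auto intro!: mult_nonneg_nonneg divide_nonneg_nonneg prod_nonneg)

lemma prod_addv: "(\<Prod>l\<in>UNIV. (a l :: real) ^ addv k i l) = a k * (\<Prod>l\<in>UNIV. a l ^ (i::'a::finite \<Rightarrow> nat) l)"
proof -
  have "(\<Prod>l\<in>UNIV. a l ^ addv k i l) = a k ^ Suc (i k) * (\<Prod>l\<in>UNIV-{k}. a l ^ i l)"
    unfolding addv_def by (rule prod_upd)
  moreover have "(\<Prod>l\<in>UNIV. a l ^ i l) = a k ^ i k * (\<Prod>l\<in>UNIV-{k}. a l ^ i l)" by (rule prod_rem)
  ultimately show ?thesis by simp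
qed

lemma gamma_pos:
  fixes w :: "'a::finite \<Rightarrow> 'a \<Rightarrow> real"
  assumes irr: "irreducible_gen w" and rev: "reversible_wrt w \<gamma>"
  shows "\<gamma> l > 0"
proof -
  have nn: "\<forall>l. \<gamma> l \<ge> 0" and s1: "(\<Sum>l\<in>UNIV. \<gamma> l) = 1" and db: "\<forall>l m. \<gamma> l * w l m = \<gamma> m * w m l"
    using rev unfolding reversible_wrt_def by auto
  have "\<exists>m. \<gamma> m > 0"
  proof (rule ccontr)
    assume "\<not> (\<exists>m. \<gamma> m > 0)"
    then have "\<forall>m. \<gamma> m \<le> 0" by (simp add: not_less)
    then have "(\<Sum>l\<in>UNIV. \<gamma> l) \<le> 0" by (simp add: sum_nonpos)
    then show False using s1 by simp
  qed
  then obtain m where gm: "\<gamma> m > 0" by blast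
  have path: "(m, l) \<in> {(a, b). a \<noteq> b \<and> w a b > 0}\<^sup>*" using irr unfolding irreducible_gen_def by blast
  from path gm show ?thesis
  proof (induction rule: rtrancl_induct)
    case base then show ?case .
  next
    case (step y x)
    then have "\<gamma> y > 0" "w y x > 0" by auto
    then have "\<gamma> x * w x y > 0" using db by (metis mult_pos_pos)
    then have "\<gamma> x \<noteq> 0" by auto
    then show ?case using nn[rule_format, of x] by linarith
  qed
qed

lemma Ufun_neg_ev: "(\<lambda>a. - ev l m a) = ev m l"
  by (auto simp: ev_def)

lemma sq_diff_sqrt: "x \<ge> 0 \<Longrightarrow> y \<ge> 0 \<Longrightarrow> (sqrt x - sqrt y)\<^sup>2 = x + y - 2 * sqrt (x * y)"
  by (simp add: power2_eq_square algebra_simps real_sqrt_mult)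

definition Jv :: "('a::finite \<Rightarrow> 'a \<Rightarrow> real) \<Rightarrow> ('a \<Rightarrow> real) \<Rightarrow> real" where
  "Jv w z = (\<Sum>(l, m)\<in>PP. w l m * z l - sqrt (w l m * z l * (w m l * z m)))"

lemma Sfrak_sum:
  fixes w :: "'a::finite \<Rightarrow> 'a \<Rightarrow> real"
  assumes wpos: "\<forall>l m. l \<noteq> m \<longrightarrow> w l m \<ge> 0" and zpos: "\<forall>l. z l > 0"
  shows "1/2 * (\<Sum>k\<in>Sfrak. (sqrt (Ufun w k z) - sqrt (Ufun w (\<lambda>a. - k a) z))\<^sup>2) = Jv w z"
proof -
  have inj: "inj_on (\<lambda>(l, m). ev l m) (PP :: ('a \<times> 'a) set)"
    by (rule inj_onI) (auto simp: PP_def dest: ev_inj)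
  have "(\<Sum>k\<in>Sfrak. (sqrt (Ufun w k z) - sqrt (Ufun w (\<lambda>a. - k a) z))\<^sup>2)
      = (\<Sum>(l, m)\<in>PP. (sqrt (Ufun w (ev l m) z) - sqrt (Ufun w (\<lambda>a. - ev l m a) z))\<^sup>2)"
    unfolding Sfrak_ev by (subst sum.reindex[OF inj]) (simp add: case_prod_beta)
  also have "\<dots> = (\<Sum>(l, m)\<in>PP. w l m * z l + w m l * z m - 2 * sqrt (w l m * z l * (w m l * z m)))"
  proof (rule sum.cong, simp, clarify)
    fix l m :: 'a assume "(l, m) \<in> PP"
    then have lm: "l \<noteq> m" by (simp add: PP_def)
    have "w l m \<ge> 0" "w m l \<ge> 0" "z l \<ge> 0" "z m \<ge> 0" using wpos zpos lm by (auto intro: less_imp_le)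
    then have "w l m * z l \<ge> 0" "w m l * z m \<ge> 0" by simp_all
    then show "(sqrt (Ufun w (ev l m) z) - sqrt (Ufun w (\<lambda>a. - ev l m a) z))\<^sup>2 = w l m * z l + w m l * z m - 2 * sqrt (w l m * z l * (w m l * z m))"
      unfolding Ufun_neg_ev Ufun_ev[OF lm] Ufun_ev[OF lm[symmetric]] by (rule sq_diff_sqrt)
  qed
  also have "\<dots> = (\<Sum>(l, m)\<in>PP. w l m * z l) + (\<Sum>(l, m)\<in>PP. w m l * z m) - 2 * (\<Sum>(l, m)\<in>PP. sqrt (w l m * z l * (w m l * z m)))"
    by (simp add: sum.distrib sum_subtractf sum_distrib_left case_prod_beta)
  also have "(\<Sum>(l, m)\<in>PP. w m l * z m) = (\<Sum>(l, m)\<in>PP. w l m * z l)"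
    by (rule swapPP[symmetric])
  finally show ?thesis unfolding Jv_def by (simp add: sum_subtractf case_prod_beta)
qed

lemma key:
  fixes wlm wml zl zm gl gm :: real
  assumes "gl > 0" "gm > 0" "gl * wlm = gm * wml" "wlm \<ge> 0" "zl > 0" "zm > 0"
  shows "wlm * zl * (sqrt (zm / gm) / sqrt (zl / gl)) = sqrt (wlm * zl * (wml * zm))"
proof -
  have wml: "wml = gl * wlm / gm" using assms by (simp add: field_simps)
  have "(wlm * zl * (sqrt (zm / gm) / sqrt (zl / gl)))^2 = wlm^2 * zl^2 * ((sqrt (zm / gm))^2 / (sqrt (zl / gl))^2)"
    by (simp add: power_mult_distrib power_divide)
  also have "\<dots> = wlm^2 * zl^2 * ((zm / gm) / (zl / gl))" using assms by simp
  also have "\<dots> = wlm * zl * (wml * zm)" unfolding wml using assms by (simp add: field_simps power2_eq_square)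
  finally have sq: "(wlm * zl * (sqrt (zm / gm) / sqrt (zl / gl)))^2 = wlm * zl * (wml * zm)" .
  have nn: "wlm * zl * (sqrt (zm / gm) / sqrt (zl / gl)) \<ge> 0" using assms by simp
  show ?thesis using real_sqrt_unique[OF sq nn] by simp
qed

theorem theorem2:
  fixes w :: "'a::finite \<Rightarrow> 'a \<Rightarrow> real" and \<gamma> :: "'a \<Rightarrow> real"
    and r z :: "'a \<Rightarrow> real" and N :: nat
  assumes "N \<ge> 1"
    and "markov_generator w" and "irreducible_gen w" and "reversible_wrt w \<gamma>"
    and "\<forall>l. z l > 0" and "(\<Sum>l\<in>UNIV. z l) = real N"
  shows "multinomial N (\<lambda>l. z l / real N) \<in> feasible N z
    \<and> (\<forall>\<nu>\<in>feasible N z. objective w r N \<nu> \<le> objective w r N (multinomial N (\<lambda>l. z l / real N)))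
    \<and> Lam w r N z = Rlin r z - 1/2 * (\<Sum>k\<in>Sfrak. (sqrt (Ufun w k z) - sqrt (Ufun w (\<lambda>a. - k a) z))\<^sup>2)
    \<and> objective w r N (multinomial N (\<lambda>l. z l / real N))
        = Rlin r z - 1/2 * (\<Sum>k\<in>Sfrak. (sqrt (Ufun w k z) - sqrt (Ufun w (\<lambda>a. - k a) z))\<^sup>2)"
proof -
  obtain M where NM: "N = Suc M" using assms(1) by (cases N) auto
  have wpos: "\<forall>l m. l \<noteq> m \<longrightarrow> w l m \<ge> 0" using assms(2) unfolding markov_generator_def by auto
  have zpos: "\<forall>l. z l > 0" using assms(5) .
  have gpos: "\<And>l. \<gamma> l > 0" using gamma_pos[OF assms(3,4)] .
  have db: "\<And>l m. \<gamma> l * w l m = \<gamma> m * w m l" using assms(4) unfolding reversible_wrt_def by auto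
  define p where "p = (\<lambda>l. z l / real N)"
  have Npos: "real N > 0" using NM by simp
  have pnn: "\<forall>l. p l \<ge> 0" using zpos Npos by (auto simp: p_def intro: less_imp_le)
  have psum: "(\<Sum>l\<in>UNIV. p l) = 1" unfolding p_def using assms(6) Npos
    by (simp add: sum_divide_distrib[symmetric])
  define \<mu> where "\<mu> = multinomial N p"
  have mueq: "multinomial N (\<lambda>l. z l / real N) = \<mu>" by (simp add: \<mu>_def p_def)
  have Jeq: "1/2 * (\<Sum>k\<in>Sfrak. (sqrt (Ufun w k z) - sqrt (Ufun w (\<lambda>a. - k a) z))\<^sup>2) = Jv w z"
    by (rule Sfrak_sum[OF wpos zpos])
  have mu_feas: "\<mu> \<in> feasible N z"
    unfolding feasible_def probS_def mem_Collect_eq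
  proof (intro conjI ballI allI)
    fix i show "0 \<le> \<mu> i" unfolding \<mu>_def by (rule mult_nonneg[OF pnn])
  next
    show "sum \<mu> (lattS N) = 1" unfolding \<mu>_def by (simp add: mult_sum psum)
  next
    fix l
    show "(\<Sum>i\<in>lattS N. \<mu> i * real (i l)) = z l"
      unfolding \<mu>_def NM mult_mean psum using Npos NM by (simp add: p_def del: of_nat_Suc)
  qed
  have feasD: "(\<forall>i\<in>lattS (Suc M). \<nu> i \<ge> 0) \<and> (\<forall>l. (\<Sum>i\<in>lattS (Suc M). \<nu> i * real (i l)) = z l)"
    if "\<nu> \<in> feasible N z" for \<nu>
    using that unfolding feasible_def probS_def NM by auto
  have Ifeas: "Jv w z \<le> I_U w N \<nu>" if nu: "\<nu> \<in> feasible N z" for \<nu>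
  proof -
    have nn: "\<forall>i\<in>lattS (Suc M). \<nu> i \<ge> 0" and mean: "\<And>l. (\<Sum>i\<in>lattS (Suc M). \<nu> i * real (i l)) = z l"
      using feasD[OF nu] by auto
    define a where "a = (\<lambda>l. sqrt (z l / \<gamma> l))"
    have apos: "\<And>l. a l > 0" unfolding a_def using zpos gpos by simp
    define v where "v = (\<lambda>i. \<Prod>l\<in>UNIV. a l ^ (i::'a \<Rightarrow> nat) l)"
    have vpos: "\<And>i. v i > 0" unfolding v_def using apos by (simp add: prod_pos)
    have vratio: "\<And>l m i. v (addv m i) / v (addv l i) = a m / a l"
      unfolding v_def prod_addv using vpos[unfolded v_def] apos by (simp add: field_simps less_imp_neq[symmetric])
    have Asum: "(\<Sum>i\<in>lattS M. Aw w \<nu> l m i) = w l m * z l" for l m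
    proof -
      have "(\<Sum>i\<in>lattS M. Aw w \<nu> l m i) = w l m * (\<Sum>i\<in>lattS M. real (Suc (i l)) * \<nu> (addv l i))"
        unfolding Aw_def by (simp add: sum_distrib_left algebra_simps)
      also have "\<dots> = w l m * (\<Sum>j\<in>lattS (Suc M). real (j l) * \<nu> j)" by (simp only: shift)
      also have "\<dots> = w l m * z l" using mean[of l] by (simp add: mult.commute)
      finally show ?thesis .
    qed
    have "Gf w (Suc M) \<nu> v = (\<Sum>(l, m)\<in>PP. \<Sum>i\<in>lattS M. Aw w \<nu> l m i - Aw w \<nu> l m i * (a m / a l))"
      using Gf_formula[of M v w \<nu>] vpos vratio by simp
    also have "\<dots> = (\<Sum>(l, m)\<in>PP. w l m * z l - w l m * z l * (a m / a l))"
      by (simp add: sum_subtractf sum_distrib_right[symmetric] Asum case_prod_beta sum_divide_distrib[symmetric])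
    also have "\<dots> = Jv w z" unfolding Jv_def
    proof (rule sum.cong, simp, clarify)
      fix l m :: 'a assume "(l, m) \<in> PP"
      then have lm: "l \<noteq> m" by (simp add: PP_def)
      show "w l m * z l - w l m * z l * (a m / a l) = w l m * z l - sqrt (w l m * z l * (w m l * z m))"
        unfolding a_def using key[OF gpos[of l] gpos[of m] db[of l m]] wpos lm zpos by simp
    qed
    finally have "Gf w (Suc M) \<nu> v = Jv w z" .
    then show ?thesis using I_U_ge[OF wpos nn, of v] vpos NM by simp
  qed
  have Kmu: "Kb w M \<mu> = Jv w z"
  proof -
    have A: "Aw w \<mu> l m i = w l m * z l * multinomial M p i" if i: "i \<in> lattS M" for l m :: 'a and i :: "'a \<Rightarrow> nat"
    proof -
      have "Aw w \<mu> l m i = w l m * (real (Suc (i l)) * multinomial (Suc M) p (addv l i))"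
        unfolding Aw_def \<mu>_def NM by simp
      also have "\<dots> = w l m * (real (Suc M) * p l * multinomial M p i)" by (simp only: mult_core[OF i])
      also have "\<dots> = w l m * z l * multinomial M p i" using Npos NM by (simp add: p_def del: of_nat_Suc)
      finally show ?thesis .
    qed
    have "Kb w M \<mu> = (\<Sum>(l, m)\<in>PP. \<Sum>i\<in>lattS M. (w l m * z l - sqrt (w l m * z l * (w m l * z m))) * multinomial M p i)"
      unfolding Kb_def
    proof (rule sum.cong, simp, clarify, rule sum.cong, simp)
      fix l m :: 'a and i :: "'a \<Rightarrow> nat" assume "i \<in> lattS M"
      moreover have "multinomial M p i \<ge> 0" by (rule mult_nonneg[OF pnn])
      ultimately show "Aw w \<mu> l m i - sqrt (Aw w \<mu> l m i * Aw w \<mu> m l i) = (w l m * z l - sqrt (w l m * z l * (w m l * z m))) * multinomial M p i"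
        by (simp add: A real_sqrt_mult algebra_simps)
    qed
    also have "\<dots> = Jv w z" unfolding Jv_def
      by (simp add: sum_distrib_left[symmetric] mult_sum psum case_prod_beta)
    finally show ?thesis .
  qed
  have Imu: "I_U w N \<mu> = Jv w z"
  proof (rule antisym)
    have "\<forall>i\<in>lattS (Suc M). \<mu> i \<ge> 0" using feasD[OF mu_feas] by auto
    then show "I_U w N \<mu> \<le> Jv w z" using I_U_le[OF wpos, of M \<mu>] Kmu NM by simp
    show "Jv w z \<le> I_U w N \<mu>" by (rule Ifeas[OF mu_feas])
  qed
  have pairR: "pairR N \<nu> r = Rlin r z" if nu: "\<nu> \<in> feasible N z" for \<nu>
  proof -
    have mean: "\<And>l. (\<Sum>i\<in>lattS N. \<nu> i * real (i l)) = z l" using nu unfolding feasible_def by auto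
    have "pairR N \<nu> r = (\<Sum>l\<in>UNIV. r l * (\<Sum>i\<in>lattS N. \<nu> i * real (i l)))"
      unfolding pairR_def Rlin_def by (simp add: sum_distrib_left sum.swap[of _ "lattS N"] algebra_simps)
    also have "\<dots> = Rlin r z" unfolding Rlin_def mean ..
    finally show ?thesis .
  qed
  have obj_mu: "objective w r N \<mu> = Rlin r z - Jv w z"
    unfolding objective_def pairR[OF mu_feas] Imu ..
  have obj_le: "objective w r N \<nu> \<le> objective w r N \<mu>" if nu: "\<nu> \<in> feasible N z" for \<nu>
  proof -
    have "objective w r N \<nu> = Rlin r z - I_U w N \<nu>" unfolding objective_def pairR[OF nu] ..
    then show ?thesis using obj_mu Ifeas[OF nu] by linarith
  qed
  have Lam: "Lam w r N z = objective w r N \<mu>"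
    unfolding Lam_def by (rule cSup_eq_maximum) (use mu_feas obj_le in auto)
  show ?thesis unfolding mueq Jeq using mu_feas obj_le Lam obj_mu by simp
qed

end
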